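(* Let $\mathbb{K}$ be a field of characteristic zero, let $V$ be an $n$-dimensional $\mathbb{K}$-vector space, and let $t,s\in\mathbb{K}\setminus\{0,1\}$ be arbitrary. Then the functions $\widehat{\phi}_{n,t}$ and $\widehat{\phi}_{n,s}$ on $\mathcal{L}(V)$ are equal.
   Context: $C^2(V;V)$ is the space of antisymmetric bilinear maps $V\times V\to V$. $\mathcal{L}(V)=\{\lambda\in C^2(V;V): (V,\lambda)\text{ is a Lie algebra}\}$, i.e. $\lambda$ satisfies the Jacobi identity $\lambda(X,\lambda(Y,Z))+\lambda(Y,\lambda(Z,X))+\lambda(Z,\lambda(X,Y))=0$. For $t\in\mathbb{K}$, $\mathcal{D}(t,1,0)(V,\lambda)$ is the space of linear maps $D:V\to V$ with $tD\lambda(X,Y)=\lambda(DX,Y)$ for all $X,Y$, and $\widehat{\phi}_{n,t}:\mathcal{L}(V)\to\{0,1,\dots,n^2\}$ is given by $\widehat{\phi}_{n,t}(\lambda)=\dim\mathcal{D}(t,1,0)(V,\lambda)$. *)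

theory Defs
  imports "HOL-Analysis.Analysis" "HOL-Library.Function_Algebras"
begin

definition C2 :: "('k::field \<Rightarrow> 'v::ab_group_add \<Rightarrow> 'v) \<Rightarrow> ('v \<Rightarrow> 'v \<Rightarrow> 'v) set" where
  "C2 smult_V = {lam. (\<forall>x. Vector_Spaces.linear smult_V smult_V (\<lambda>y. lam x y))
                  \<and> (\<forall>y. Vector_Spaces.linear smult_V smult_V (\<lambda>x. lam x y))
                  \<and> (\<forall>x y. lam x y = - lam y x)}"

definition LieAlg :: "('k::field \<Rightarrow> 'v::ab_group_add \<Rightarrow> 'v) \<Rightarrow> ('v \<Rightarrow> 'v \<Rightarrow> 'v) set" where
  "LieAlg smult_V = {lam \<in> C2 smult_V.
      \<forall>X Y Z. lam X (lam Y Z) + lam Y (lam Z X) + lam Z (lam X Y) = 0}"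

definition Dt10 :: "('k::field \<Rightarrow> 'v::ab_group_add \<Rightarrow> 'v) \<Rightarrow> 'k \<Rightarrow> ('v \<Rightarrow> 'v \<Rightarrow> 'v) \<Rightarrow> ('v \<Rightarrow> 'v) set" where
  "Dt10 smult_V t lam = {D. Vector_Spaces.linear smult_V smult_V D
      \<and> (\<forall>X Y. smult_V t (D (lam X Y)) = lam (D X) Y)}"

text \<open>Pointwise scalar multiplication on maps V -> V (the vector space End(V)
  sits inside it as a subspace).\<close>
definition fun_scale :: "('k::field \<Rightarrow> 'v::ab_group_add \<Rightarrow> 'v) \<Rightarrow> 'k \<Rightarrow> ('v \<Rightarrow> 'v) \<Rightarrow> ('v \<Rightarrow> 'v)" where
  "fun_scale smult_V c f = (\<lambda>x. smult_V c (f x))"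

definition phi_hat :: "('k::field \<Rightarrow> 'v::ab_group_add \<Rightarrow> 'v) \<Rightarrow> 'k \<Rightarrow> ('v \<Rightarrow> 'v \<Rightarrow> 'v) \<Rightarrow> nat" where
  "phi_hat smult_V t lam = vector_space.dim (fun_scale smult_V) (Dt10 smult_V t lam)"

end

theory Submission
  imports Defs
begin

lemma lin_facts:
  assumes "Vector_Spaces.linear s1 s2 f"
  shows "f 0 = 0" "f (- x) = - f x" "f (a + b) = f a + f b" "f (s1 c a) = s2 c (f a)"
    "f (a - b) = f a - f b"
proof -
  interpret Vector_Spaces.linear s1 s2 f by fact
  show "f 0 = 0" "f (- x) = - f x" "f (a + b) = f a + f b" "f (s1 c a) = s2 c (f a)"
    "f (a - b) = f a - f b" by (simp_all add: zero neg add scale diff)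
qed

lemma fs_vs: "vector_space s \<Longrightarrow> vector_space (fun_scale s)"
  unfolding vector_space_def fun_scale_def by (auto simp: fun_eq_iff)

lemma dim_image_eq_gen:
  assumes "vector_space s1" "vector_space s2" "Vector_Spaces.linear s1 s2 f"
    and fi: "inj_on f (module.span s1 S)"
  shows "vector_space.dim s2 (f ` S) = vector_space.dim s1 S"
proof -
  interpret vector_space_pair s1 s2 using assms by (simp add: vector_space_pair_def)
  interpret lf: Vector_Spaces.linear s1 s2 f by fact
  obtain B where B: "B \<subseteq> S" "vs1.independent B" "S \<subseteq> vs1.span B" "card B = vs1.dim S"
    using vs1.basis_exists[of S] by auto
  then have "vs1.span S = vs1.span B"
    using vs1.span_mono[of B S] vs1.span_mono[of S "vs1.span B"] vs1.span_span[of B] by auto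
  moreover have "card (f ` B) = card B"
    using assms card_image[of f B] inj_on_subset[of f "vs1.span S" B] B vs1.span_superset by auto
  moreover have "(f ` B) \<subseteq> (f ` S)"
    using B by auto
  ultimately show ?thesis
    by (metis B(2) B(4) fi lf.dependent_inj_imageD lf.span_image vs2.dim_eq_card_independent vs2.dim_span)
qed


lemma basic_facts:
  assumes V: "vector_space sm" and lam: "lam \<in> LieAlg sm" and D: "D \<in> Dt10 sm t lam"
  shows "\<And>x. Vector_Spaces.linear sm sm (lam x)"
    and "\<And>y. Vector_Spaces.linear sm sm (\<lambda>x. lam x y)"
    and "\<And>x y. lam x y = - lam y x"
    and "\<And>X Y Z. lam X (lam Y Z) + lam Y (lam Z X) + lam Z (lam X Y) = 0"
    and "Vector_Spaces.linear sm sm D"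
    and "\<And>X Y. sm t (D (lam X Y)) = lam (D X) Y"
    and "\<And>X Y. lam X (D Y) = sm t (D (lam X Y))"
proof -
  interpret V: vector_space sm by fact
  show l2: "\<And>x. Vector_Spaces.linear sm sm (lam x)"
    and l1: "\<And>y. Vector_Spaces.linear sm sm (\<lambda>x. lam x y)"
    and anti: "\<And>x y. lam x y = - lam y x"
    and "\<And>X Y Z. lam X (lam Y Z) + lam Y (lam Z X) + lam Z (lam X Y) = 0"
    using lam unfolding LieAlg_def C2_def mem_Collect_eq by blast+
  show Dl: "Vector_Spaces.linear sm sm D" and Dr: "\<And>X Y. sm t (D (lam X Y)) = lam (D X) Y"
    using D unfolding Dt10_def mem_Collect_eq by blast+
  fix X Y
  have "lam X (D Y) = - lam (D Y) X" by (rule anti)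
  also have "\<dots> = - sm t (D (lam Y X))" by (simp add: Dr)
  also have "lam Y X = - lam X Y" by (rule anti)
  finally show "lam X (D Y) = sm t (D (lam X Y))"
    by (simp add: lin_facts(2)[OF Dl] V.scale_minus_right)
qed

lemma D_kill:
  assumes V: "vector_space sm" and lam: "lam \<in> LieAlg sm" and D: "D \<in> Dt10 sm t lam"
    and t: "t \<noteq> 0" "t \<noteq> 1"
  shows "D (lam X (lam Y Z)) = 0"
proof -
  interpret V: vector_space sm by fact
  note F = basic_facts[OF V lam D]
  define a where "a = D (lam X (lam Y Z))"
  define b where "b = D (lam Y (lam Z X))"
  define c where "c = D (lam Z (lam X Y))"
  have abc: "a + b + c = 0"
    unfolding a_def b_def c_def
    by (simp add: lin_facts(3)[OF F(5), symmetric] F(4) lin_facts(1)[OF F(5)])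
  have e1: "lam (D X) (lam Y Z) = sm t a" unfolding a_def by (simp add: F(6))
  have e2: "lam Y (lam Z (D X)) = sm (t*t) b" unfolding b_def
    by (simp add: F(7) lin_facts(4)[OF F(1)])
  have e3: "lam Z (lam (D X) Y) = sm (t*t) c" unfolding c_def
    by (simp add: F(6)[symmetric] F(7) lin_facts(4)[OF F(1)])
  have "sm t a + sm (t*t) b + sm (t*t) c = 0"
    using F(4)[of "D X" Y Z] e1 e2 e3 by simp
  then have "sm t a + sm (t*t) (b + c) = 0" by (simp add: V.scale_right_distrib add.assoc)
  moreover have "b + c = - a"
  proof -
    have "a + (b + c) = 0" using abc by (simp only: add.assoc)
    then show ?thesis by (rule add.inverse_unique[symmetric])
  qed
  ultimately have "sm t a - sm (t*t) a = 0" by (simp add: V.scale_minus_right)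
  then have "sm (t - t*t) a = 0" by (simp add: V.scale_left_diff_distrib)
  moreover have "t - t*t \<noteq> 0"
  proof
    assume "t - t*t = 0"
    then have "t * (1 - t) = 0" by (simp add: algebra_simps)
    with t show False by simp
  qed
  ultimately show ?thesis unfolding a_def by simp
qed

lemma D_kill2:
  assumes V: "vector_space sm" and lam: "lam \<in> LieAlg sm" and D: "D \<in> Dt10 sm t lam"
    and t: "t \<noteq> 0" "t \<noteq> 1"
    and w: "w \<in> module.span sm {lam x y |x y. True}"
  shows "D (lam w Y) = 0" and "lam (D w) Y = 0"
proof -
  interpret V: vector_space sm by fact
  note F = basic_facts[OF V lam D]
  have sub: "V.subspace {w. D (lam w Y) = 0}"
    unfolding V.subspace_def Ball_def mem_Collect_eq
  proof (intro conjI allI impI)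
    show "D (lam 0 Y) = 0" using lin_facts(1)[OF F(2)[of Y]] lin_facts(1)[OF F(5)] by simp
    fix x y assume "D (lam x Y) = 0" "D (lam y Y) = 0"
    then show "D (lam (x + y) Y) = 0" using lin_facts(3)[OF F(2)[of Y]] lin_facts(3)[OF F(5)] by simp
  next
    fix c x assume h: "D (lam x Y) = 0"
    have "D (lam (sm c x) Y) = sm c (D (lam x Y))"
      by (simp only: lin_facts(4)[OF F(2)[of Y]] lin_facts(4)[OF F(5)])
    also have "\<dots> = 0" by (simp only: h V.scale_zero_right)
    finally show "D (lam (sm c x) Y) = 0" .
  qed
  have gen: "{lam x y |x y. True} \<subseteq> {w. D (lam w Y) = 0}"
  proof
    fix x assume "x \<in> {lam x y |x y. True}"
    then obtain p q where "x = lam p q" by auto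
    then have "lam x Y = - lam Y (lam p q)" using F(3)[of x Y] by simp
    then show "x \<in> {w. D (lam w Y) = 0}"
      using D_kill[OF V lam D t, of Y p q] lin_facts(2)[OF F(5), of "lam Y (lam p q)"] by simp
  qed
  have ww: "w \<in> {w. D (lam w Y) = 0}" using V.span_minimal[OF gen sub] w by (rule subsetD)
  show *: "D (lam w Y) = 0" using ww by (rule CollectD)
  have "lam (D w) Y = sm t (D (lam w Y))" using F(6)[of w Y] by (rule sym)
  also have "\<dots> = 0" using * by simp
  finally show "lam (D w) Y = 0" .
qed

lemma D_transfer:
  assumes V: "vector_space sm" and lam: "lam \<in> LieAlg sm" and D: "D \<in> Dt10 sm t lam"
    and t: "t \<noteq> 0" "t \<noteq> 1" and s: "s \<noteq> 0"
    and P: "Vector_Spaces.linear sm sm P"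
    and Pid: "\<And>x y. P (lam x y) = lam x y"
    and Pin: "\<And>v. P v \<in> module.span sm {lam x y |x y. True}"
  shows "(\<lambda>v. D (v + sm (t/s - 1) (P v))) \<in> Dt10 sm s lam"
proof -
  interpret V: vector_space sm by fact
  note F = basic_facts[OF V lam D]
  have lin: "Vector_Spaces.linear sm sm (\<lambda>v. D (v + sm (t/s - 1) (P v)))"
    unfolding Vector_Spaces.linear_iff using V
    by (simp add: lin_facts[OF F(5)] lin_facts[OF P] V.scale_right_distrib V.scale_left_commute)
  have eq: "sm s (D (lam X Y + sm (t/s - 1) (P (lam X Y)))) = lam (D (X + sm (t/s - 1) (P X))) Y" for X Y
  proof -
    have "lam X Y + sm (t/s - 1) (P (lam X Y)) = sm (t/s) (lam X Y)"
      by (simp add: Pid V.scale_left_diff_distrib)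
    then have "sm s (D (lam X Y + sm (t/s - 1) (P (lam X Y)))) = sm t (D (lam X Y))"
      using s by (simp add: lin_facts(4)[OF F(5)])
    also have "\<dots> = lam (D X) Y" by (rule F(6))
    also have "\<dots> = lam (D (X + sm (t/s - 1) (P X))) Y"
      using D_kill2(2)[OF V lam D t Pin, of X Y]
      by (simp add: lin_facts[OF F(5)] lin_facts[OF F(2)])
    finally show ?thesis .
  qed
  show ?thesis unfolding Dt10_def mem_Collect_eq using lin eq by blast
qed


lemma inv_aux:
  assumes V: "vector_space sm" and P: "Vector_Spaces.linear sm sm P"
    and PP: "\<And>v. P (P v) = P v" and c: "c1 + c2 + c2 * c1 = 0"
  shows "(v + sm c1 (P v)) + sm c2 (P (v + sm c1 (P v))) = v"
proof -
  interpret V: vector_space sm by fact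
  have "P (v + sm c1 (P v)) = P v + sm c1 (P v)"
    by (simp add: lin_facts(3,4)[OF P] PP)
  then have "(v + sm c1 (P v)) + sm c2 (P (v + sm c1 (P v)))
      = v + (sm c1 (P v) + sm c2 (P v) + sm (c2 * c1) (P v))"
    by (simp add: V.scale_right_distrib add.assoc)
  also have "sm c1 (P v) + sm c2 (P v) + sm (c2 * c1) (P v) = sm (c1 + c2 + c2 * c1) (P v)"
    by (simp add: V.scale_left_distrib)
  finally show ?thesis using c by simp
qed

theorem theorem3p7:
  fixes smult_V :: "'k::field_char_0 \<Rightarrow> 'v::ab_group_add \<Rightarrow> 'v"
    and Basis :: "'v set" and n :: nat and t s :: 'k
  assumes "finite_dimensional_vector_space smult_V Basis"
    and "vector_space.dim smult_V (UNIV :: 'v set) = n"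
    and "t \<noteq> 0" and "t \<noteq> 1" and "s \<noteq> 0" and "s \<noteq> 1"
  shows "\<forall>lam \<in> LieAlg smult_V. phi_hat smult_V t lam = phi_hat smult_V s lam"
proof
  fix lam assume lam: "lam \<in> LieAlg smult_V"
  interpret V: finite_dimensional_vector_space smult_V Basis by fact
  have V: "vector_space smult_V" by unfold_locales
  interpret pair: vector_space_pair smult_V smult_V by unfold_locales
  define G where "G = V.span {lam x y |x y. True}"
  obtain B0 where B0: "B0 \<subseteq> G" "V.independent B0" "G \<subseteq> V.span B0"
    by (rule V.basis_exists[of G])
  define P where "P = pair.construct B0 id"
  have Plin: "Vector_Spaces.linear smult_V smult_V P"
    unfolding P_def by (rule pair.linear_construct[OF B0(2)])
  have PG: "P w = w" if "w \<in> G" for w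
  proof -
    have "P w = id w"
      by (rule pair.linear_eq_on[OF Plin V.linear_id, of w B0])
        (use that B0 in \<open>auto simp: P_def pair.construct_basis\<close>)
    then show ?thesis by simp
  qed
  have spanB0: "V.span B0 \<subseteq> G"
    using V.span_mono[OF B0(1)] unfolding G_def V.span_span .
  have Pin: "P v \<in> G" for v
  proof -
    have "P v \<in> V.span (id ` B0)" unfolding P_def by (rule pair.construct_in_span[OF B0(2)])
    then show ?thesis using spanB0 by auto
  qed
  have Pin': "P v \<in> V.span {lam x y |x y. True}" for v using Pin[of v] unfolding G_def .
  have Pid: "P (lam x y) = lam x y" for x y
    by (rule PG) (auto simp: G_def intro: V.span_base)
  have PP: "P (P v) = P v" for v by (rule PG[OF Pin])
  define Phi where "Phi = (\<lambda>a b (D :: 'v \<Rightarrow> 'v) v. D (v + smult_V (a/b - 1) (P v)))"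
  have trans: "Phi a b D \<in> Dt10 smult_V b lam"
    if "D \<in> Dt10 smult_V a lam" "a \<noteq> 0" "a \<noteq> 1" "b \<noteq> 0" for a b D
    unfolding Phi_def by (rule D_transfer[OF V lam that(1) that(2,3) that(4) Plin Pid Pin'])
  have inv: "Phi a b (Phi b a D) = D" if "a \<noteq> 0" "b \<noteq> 0" for a b D
  proof
    fix v
    have c: "(a/b - 1) + (b/a - 1) + (b/a - 1) * (a/b - 1) = (0::'k)"
      using that by (simp add: field_simps)
    show "Phi a b (Phi b a D) v = D v"
      unfolding Phi_def by (simp only: inv_aux[OF V Plin PP c])
  qed
  have img: "Dt10 smult_V s lam = Phi t s ` Dt10 smult_V t lam"
  proof
    show "Phi t s ` Dt10 smult_V t lam \<subseteq> Dt10 smult_V s lam"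
      using trans assms(3,4,5) by blast
    show "Dt10 smult_V s lam \<subseteq> Phi t s ` Dt10 smult_V t lam"
    proof
      fix E assume E: "E \<in> Dt10 smult_V s lam"
      have "Phi s t E \<in> Dt10 smult_V t lam" using trans[OF E assms(5,6,3)] .
      moreover have "E = Phi t s (Phi s t E)" using inv[OF assms(3,5)] by simp
      ultimately show "E \<in> Phi t s ` Dt10 smult_V t lam" by blast
    qed
  qed
  have FV: "vector_space (fun_scale smult_V)" by (rule fs_vs[OF V])
  have lin: "Vector_Spaces.linear (fun_scale smult_V) (fun_scale smult_V) (Phi t s)"
    unfolding Vector_Spaces.linear_iff using FV
    by (simp add: Phi_def fun_scale_def fun_eq_iff)
  have injP: "inj_on (Phi t s) X" for X
    by (rule inj_on_inverseI[where g = "Phi s t"]) (rule inv[OF assms(5,3)])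
  have "vector_space.dim (fun_scale smult_V) (Phi t s ` Dt10 smult_V t lam)
      = vector_space.dim (fun_scale smult_V) (Dt10 smult_V t lam)"
    by (rule dim_image_eq_gen[OF FV FV lin injP])
  then show "phi_hat smult_V t lam = phi_hat smult_V s lam"
    unfolding phi_hat_def img by simp
qed

end
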